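(* Fix $\lambda>0$ and a positive integer $d$. Let $\phi$ be a message and $\Phi=\phi'$. Let $p,q$ be positive reals with $\frac1p+\frac1q=1$. Define $$S_{\phi,p}(x)=\left(\frac{e^{-x}}{\Phi(e^x-1)}\right)^p,\qquad \Xi_{\phi,q}(d,x)=d^{q-1}\left(\frac{\Phi(f_d(x))f_d(x)}{(1+x)\Phi(x)}\right)^q,$$ and $\xi_{\phi,q}(d)=\sup_{x\ge0}\Xi_{\phi,q}(d,x)$. If $S_{\phi,p}$ is concave on the non-negative reals, then for any two vectors $\vec x,\vec y\in\phi(\mathbb R^+)^d$, $$\left|f^\phi_d(\vec x)-f^\phi_d(\vec y)\right|^q\le\xi_{\phi,q}(d)\,\|\vec x-\vec y\|_q^q.$$
   Context: $f_d(R_1,\dots,R_d)=\lambda\prod_{i=1}^d\frac{1}{1+R_i}$, and the one-argument version is $f_d(x)=f_d(x,\dots,x)=\lambda/(1+x)^d$. A message is a strictly increasing, continuously differentiable function $\phi:(0,\infty)\to\mathbb R$ whose derivative is bounded away from $0$ on every interval $(0,M]$. With $\psi=\phi^{-1}$, $f^\phi_d(x_1,\dots,x_d)=\phi\big(f_d(\psi(x_1),\dots,\psi(x_d))\big)$. *)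

theory Defs
  imports "HOL-Analysis.Analysis"
begin

definition fd :: "real \<Rightarrow> nat \<Rightarrow> (nat \<Rightarrow> real) \<Rightarrow> real" where
  "fd lam d R = lam * (\<Prod>i<d. 1 / (1 + R i))"

definition fd1 :: "real \<Rightarrow> nat \<Rightarrow> real \<Rightarrow> real" where
  "fd1 lam d x = lam / (1 + x) ^ d"

definition message :: "(real \<Rightarrow> real) \<Rightarrow> bool" where
  "message \<phi> \<longleftrightarrow>
     strict_mono_on {0<..} \<phi> \<and>
     (\<forall>x>0. \<phi> differentiable (at x)) \<and>
     continuous_on {0<..} (deriv \<phi>) \<and>
     (\<forall>M>0. \<exists>c>0. \<forall>x\<in>{0<..M}. c \<le> deriv \<phi> x)"

definition fphi :: "(real \<Rightarrow> real) \<Rightarrow> real \<Rightarrow> nat \<Rightarrow> (nat \<Rightarrow> real) \<Rightarrow> real" where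
  "fphi \<phi> lam d x = \<phi> (fd lam d (\<lambda>i. inv_into {0<..} \<phi> (x i)))"

definition S_fun :: "(real \<Rightarrow> real) \<Rightarrow> real \<Rightarrow> real \<Rightarrow> real" where
  "S_fun \<phi> p x = (exp (- x) / deriv \<phi> (exp x - 1)) powr p"

definition Xi_fun :: "(real \<Rightarrow> real) \<Rightarrow> real \<Rightarrow> real \<Rightarrow> nat \<Rightarrow> real \<Rightarrow> real" where
  "Xi_fun \<phi> lam q d x =
     real d powr (q - 1) *
     (deriv \<phi> (fd1 lam d x) * fd1 lam d x / ((1 + x) * deriv \<phi> x)) powr q"

text \<open>xi = sup over x of Xi, taken in the extended reals (may be +oo).\<close>
definition xi_fun :: "(real \<Rightarrow> real) \<Rightarrow> real \<Rightarrow> real \<Rightarrow> nat \<Rightarrow> ereal" where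
  "xi_fun \<phi> lam q d = (SUP x\<in>{0<..}. ereal (Xi_fun \<phi> lam q d x))"

end

theory Submission
  imports Defs
begin

lemma inv_strong:
  fixes f :: "real \<Rightarrow> real"
  shows "\<lbrakk>DERIV f x :> f'; f' \<noteq> 0; open S; x \<in> S; continuous_on S f;
         \<And>z. z \<in> S \<Longrightarrow> g (f z) = z\<rbrakk>
         \<Longrightarrow> DERIV g (f x) :> inverse (f')"
  unfolding has_field_derivative_def
  by (rule has_derivative_inverse_strong [of S x f g]) auto

lemma holder:
  fixes a b :: "nat \<Rightarrow> real"
  assumes I: "finite I" and a: "\<And>i. i \<in> I \<Longrightarrow> a i \<ge> 0" and b: "\<And>i. i \<in> I \<Longrightarrow> b i \<ge> 0"
    and pq: "p > 1" "q > 1" "1/p + 1/q = 1"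
  shows "(\<Sum>i\<in>I. a i * b i) \<le> (\<Sum>i\<in>I. a i powr p) powr (1/p) * (\<Sum>i\<in>I. b i powr q) powr (1/q)"
proof (cases "(\<Sum>i\<in>I. a i powr p) = 0 \<or> (\<Sum>i\<in>I. b i powr q) = 0")
  case True
  then have "(\<forall>i\<in>I. a i = 0) \<or> (\<forall>i\<in>I. b i = 0)"
    using I by (auto simp: sum_nonneg_eq_0_iff)
  then have "(\<Sum>i\<in>I. a i * b i) = 0" by auto
  then show ?thesis by simp
next
  case False
  define A where "A = (\<Sum>i\<in>I. a i powr p)"
  define B where "B = (\<Sum>i\<in>I. b i powr q)"
  have A: "A > 0" using False a unfolding A_def by (metis order_le_less powr_ge_zero sum_nonneg)
  have B: "B > 0" using False b unfolding B_def by (metis order_le_less powr_ge_zero sum_nonneg)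
  define A' where "A' = A powr (1/p)"
  define B' where "B' = B powr (1/q)"
  have A': "A' > 0" "A' powr p = A" using A pq unfolding A'_def by (auto simp: powr_powr)
  have B': "B' > 0" "B' powr q = B" using B pq unfolding B'_def by (auto simp: powr_powr)
  have "(\<Sum>i\<in>I. (a i / A') * (b i / B')) \<le> (\<Sum>i\<in>I. (a i / A') powr p / p + (b i / B') powr q / q)"
    by (rule sum_mono, rule Youngs_inequality) (use pq a b A' B' in auto)
  also have "\<dots> = (\<Sum>i\<in>I. a i powr p) / A / p + (\<Sum>i\<in>I. b i powr q) / B / q"
    using A' B' a b by (simp add: powr_divide sum.distrib sum_divide_distrib)
  also have "\<dots> = 1" using A B pq unfolding A_def[symmetric] B_def[symmetric] by simp
  finally have "(\<Sum>i\<in>I. a i * b i) / (A' * B') \<le> 1"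
    by (simp add: sum_divide_distrib[symmetric] mult.commute mult.left_commute)
  then show ?thesis using A' B' unfolding A'_def B'_def A_def B_def by (simp add: divide_le_eq)
qed

locale msg =
  fixes \<phi> :: "real \<Rightarrow> real"
  assumes m: "message \<phi>"
begin

definition "\<psi> = inv_into {0<..} \<phi>"
definition "J = \<phi> ` {0<..}"

lemma smono: "strict_mono_on {0<..} \<phi>" using m unfolding message_def by blast

lemma der: "x > 0 \<Longrightarrow> (\<phi> has_real_derivative deriv \<phi> x) (at x)"
  using m unfolding message_def by (simp add: DERIV_deriv_iff_real_differentiable)

lemma Dpos: "x > 0 \<Longrightarrow> deriv \<phi> x > 0"
proof -
  assume "x > 0"
  then obtain c where "c > 0" "\<forall>z\<in>{0<..x}. c \<le> deriv \<phi> z" using m unfolding message_def by blast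
  then show ?thesis using \<open>x>0\<close> by force
qed

lemma cont: "continuous_on {0<..} \<phi>"
  using der by (meson DERIV_isCont continuous_at_imp_continuous_on greaterThan_iff)

lemma psi_phi: "x > 0 \<Longrightarrow> \<psi> (\<phi> x) = x"
  unfolding \<psi>_def using smono by (simp add: inv_into_f_f strict_mono_on_imp_inj_on)

lemma psiJ: "z \<in> J \<Longrightarrow> \<psi> z > 0 \<and> \<phi> (\<psi> z) = z"
  unfolding J_def using psi_phi by auto

lemma psi_der: "z \<in> J \<Longrightarrow> (\<psi> has_real_derivative 1 / deriv \<phi> (\<psi> z)) (at z)"
proof -
  assume "z \<in> J"
  then obtain x where x: "x > 0" "z = \<phi> x" unfolding J_def by auto
  have "DERIV \<psi> (\<phi> x) :> inverse (deriv \<phi> x)"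
    by (rule inv_strong[where S="{0<..}"]) (use x der Dpos cont psi_phi in \<open>auto simp: less_imp_neq[symmetric]\<close>)
  then show ?thesis using x psi_phi by (simp add: inverse_eq_divide)
qed

lemma J_between: assumes "u \<in> J" "v \<in> J" "u \<le> w" "w \<le> v" shows "w \<in> J"
proof -
  obtain a b where ab: "a > 0" "b > 0" "u = \<phi> a" "v = \<phi> b" using assms unfolding J_def by auto
  have "a \<le> b"
  proof (rule ccontr)
    assume "\<not> a \<le> b"
    then have "\<phi> b < \<phi> a" using smono ab by (auto simp: strict_mono_on_def)
    then show False using assms ab by auto
  qed
  have "continuous_on {a..b} \<phi>" using cont by (rule continuous_on_subset) (use ab in auto)
  then obtain c where "c \<ge> a" "c \<le> b" "\<phi> c = w" using IVT'[of \<phi> a w b] assms ab \<open>a\<le>b\<close> by auto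
  then show ?thesis unfolding J_def using ab by force
qed


definition "T z = ln (1 + \<psi> z)"
definition "T' z = 1 / ((1 + \<psi> z) * deriv \<phi> (\<psi> z))"

lemma T_der: "z \<in> J \<Longrightarrow> (T has_real_derivative T' z) (at z)"
proof -
  assume z: "z \<in> J"
  have p: "\<psi> z > 0" using psiJ z by auto
  have "((\<lambda>z. ln (1 + \<psi> z)) has_real_derivative inverse (1 + \<psi> z) * (0 + 1 / deriv \<phi> (\<psi> z))) (at z)"
    by (rule DERIV_chain2[OF DERIV_ln], use p in simp, intro derivative_intros psi_der z)
  then show ?thesis unfolding T_def[abs_def] T'_def by (simp add: field_simps)
qed

lemma T_pos: "z \<in> J \<Longrightarrow> T z > 0" using psiJ unfolding T_def by (simp add: ln_gt_zero)

lemma S_T: "z \<in> J \<Longrightarrow> S_fun \<phi> p (T z) = T' z powr p"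
proof -
  assume z: "z \<in> J"
  have p: "\<psi> z > 0" using psiJ z by auto
  have "exp (T z) = 1 + \<psi> z" "exp (- T z) = 1 / (1 + \<psi> z)" using p unfolding T_def by (auto simp: exp_minus inverse_eq_divide)
  then show ?thesis unfolding S_fun_def T'_def by (simp add: field_simps)
qed

lemma fphi_T: assumes "\<forall>i<d. v i \<in> J"
  shows "fphi \<phi> lam d v = \<phi> (lam * exp (- (\<Sum>i<d. T (v i))))"
proof -
  have "(\<Prod>i<d. 1 / (1 + \<psi> (v i))) = exp (- (\<Sum>i<d. T (v i)))"
    unfolding exp_minus exp_sum[OF finite_lessThan] prod_inversef[symmetric]
    using assms psiJ by (intro prod.cong refl) (auto simp: T_def inverse_eq_divide add_pos_pos)
  then show ?thesis unfolding fphi_def fd_def \<psi>_def by simp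
qed


lemma main:
  fixes lam p q :: real and d :: nat and x y :: "nat \<Rightarrow> real"
  assumes lam: "lam > 0" and d: "d \<ge> 1" and pq: "p > 0" "q > 0" "1 / p + 1 / q = 1"
    and conc: "concave_on {0<..} (S_fun \<phi> p)"
    and xJ: "\<forall>i<d. x i \<in> J" and yJ: "\<forall>i<d. y i \<in> J"
  shows "\<exists>xb>0. \<bar>fphi \<phi> lam d x - fphi \<phi> lam d y\<bar> powr q
           \<le> Xi_fun \<phi> lam q d xb * (\<Sum>i<d. \<bar>x i - y i\<bar> powr q)"
proof -
  have "1/p > 0" "1/q > 0" using pq by auto
  then have "1/p < 1" "1/q < 1" using pq by linarith+
  then have p1: "p > 1" and q1: "q > 1" using pq by (auto simp: divide_less_eq)
  define z where "z i t = y i + t * (x i - y i)" for i t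
  have hz: "z i t \<in> J" if "i < d" "0 \<le> t" "t \<le> 1" for i t
  proof (cases "x i \<le> y i")
    case True
    have c1: "(1 - t) * (x i - y i) \<le> 0" "t * (x i - y i) \<le> 0"
      using that True by (auto intro: mult_nonneg_nonpos)
    have "x i \<le> z i t" "z i t \<le> y i" unfolding z_def using c1 by (auto simp: algebra_simps)
    then show ?thesis using J_between xJ yJ that by blast
  next
    case False
    have c1: "(1 - t) * (x i - y i) \<ge> 0" "t * (x i - y i) \<ge> 0"
      using that False by auto
    have "y i \<le> z i t" "z i t \<le> x i" unfolding z_def using c1 by (auto simp: algebra_simps)
    then show ?thesis using J_between xJ yJ that by blast
  qed
  define E where "E t = lam * exp (- (\<Sum>i<d. T (z i t)))" for t
  define g where "g t = \<phi> (E t)" for t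
  define g' where "g' t = deriv \<phi> (E t) * (E t * - (\<Sum>i<d. T' (z i t) * (x i - y i)))" for t
  have Epos: "E t > 0" for t unfolding E_def using lam by simp
  have dg: "DERIV g t :> g' t" if "0 \<le> t" "t \<le> 1" for t
  proof -
    have dz: "DERIV (\<lambda>t. T (z i t)) t :> T' (z i t) * (x i - y i)" if "i < d" for i
    proof -
      have "DERIV (\<lambda>t. z i t) t :> x i - y i" unfolding z_def
        by (rule derivative_eq_intros refl | simp)+
      then show ?thesis using DERIV_chain2[where f=T and g="z i", OF T_der[OF hz[OF \<open>i<d\<close> \<open>0\<le>t\<close> \<open>t\<le>1\<close>]]] by blast
    qed
    have "DERIV E t :> E t * - (\<Sum>i<d. T' (z i t) * (x i - y i))"
      unfolding E_def[abs_def]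
      by (rule derivative_eq_intros DERIV_sum dz | simp)+
    then show ?thesis unfolding g_def[abs_def] g'_def
      using DERIV_chain2[where f=\<phi> and g=E, OF der[OF Epos]] by blast
  qed
  obtain \<tau> where tau: "0 < \<tau>" "\<tau> < 1" "g 1 - g 0 = (1 - 0) * g' \<tau>"
    using MVT2[of 0 1 g g'] dg by auto
  have DE: "deriv \<phi> (E \<tau>) * E \<tau> \<ge> 0"
    using Dpos[OF Epos, of \<tau>] Epos[of \<tau>] by simp
  have g1: "g 1 = fphi \<phi> lam d x"
    unfolding g_def E_def z_def using fphi_T[of d x lam] xJ by simp
  have g0: "g 0 = fphi \<phi> lam d y"
    unfolding g_def E_def z_def using fphi_T[of d y lam] yJ by simp
  define a where "a i = T' (z i \<tau>)" for i
  define b where "b i = \<bar>x i - y i\<bar>" for i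
  define t where "t i = T (z i \<tau>)" for i
  have zt: "i < d \<Longrightarrow> z i \<tau> \<in> J" for i using hz tau by auto
  have apos: "i < d \<Longrightarrow> a i > 0" for i unfolding a_def T'_def using zt psiJ Dpos
    by (simp add: add_pos_pos)
  have tpos: "i < d \<Longrightarrow> t i > 0" for i unfolding t_def using zt T_pos by auto
  have Sa: "i < d \<Longrightarrow> S_fun \<phi> p (t i) = a i powr p" for i unfolding t_def a_def using zt S_T by auto
  define A where "A = (\<Sum>i<d. a i powr p)"
  define B where "B = (\<Sum>i<d. b i powr q)"
  define m where "m = (\<Sum>i<d. t i) / d"
  have dpos: "real d > 0" using d by simp
  have mpos: "m > 0" unfolding m_def using tpos d
    by (intro divide_pos_pos sum_pos) (auto simp: lessThan_empty_iff)
  have "- S_fun \<phi> p (\<Sum>i<d. (1 / real d) *\<^sub>R t i) \<le> (\<Sum>i<d. (1 / real d) * - S_fun \<phi> p (t i))"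
    by (rule convex_on_sum[where C="{0<..}"]) (use conc d tpos in \<open>auto simp: concave_on_def lessThan_empty_iff\<close>)
  moreover have "(\<Sum>i<d. (1 / real d) *\<^sub>R t i) = m" unfolding m_def by (simp add: sum_divide_distrib)
  ultimately have "(\<Sum>i<d. S_fun \<phi> p (t i)) / d \<le> S_fun \<phi> p m"
    by (simp add: sum_negf sum_divide_distrib[symmetric] sum_distrib_left[symmetric])
  then have AS: "A \<le> d * S_fun \<phi> p m" unfolding A_def using Sa dpos
    by (simp add: divide_le_eq mult.commute)
  define xb where "xb = exp m - 1"
  have xbpos: "xb > 0" unfolding xb_def using mpos by simp
  have em: "exp m = 1 + xb" unfolding xb_def by simp
  have Eeq: "E \<tau> = fd1 lam d xb"
  proof -
    have "(\<Sum>i<d. T (z i \<tau>)) = real d * m" unfolding m_def t_def using dpos by simp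
    then have "exp (- (\<Sum>i<d. T (z i \<tau>))) = inverse (exp m ^ d)"
      by (simp add: exp_minus exp_of_nat_mult)
    then show ?thesis unfolding E_def fd1_def em by (simp add: divide_inverse)
  qed
  have Sm: "S_fun \<phi> p m = (1 / ((1 + xb) * deriv \<phi> xb)) powr p"
    unfolding S_fun_def xb_def[symmetric] using em by (simp add: exp_minus inverse_eq_divide)
  have Dxb: "deriv \<phi> xb > 0" using Dpos xbpos by simp
  define K0 where "K0 = deriv \<phi> (E \<tau>) * E \<tau> / ((1 + xb) * deriv \<phi> xb)"
  have K0: "K0 \<ge> 0" unfolding K0_def using Dpos[OF Epos, of \<tau>] Epos[of \<tau>] xbpos Dxb by (intro divide_nonneg_pos mult_nonneg_nonneg mult_pos_pos) auto
  have "\<bar>fphi \<phi> lam d x - fphi \<phi> lam d y\<bar> = \<bar>g' \<tau>\<bar>" using tau g1 g0 by simp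
  also have "\<dots> = deriv \<phi> (E \<tau>) * E \<tau> * \<bar>\<Sum>i<d. a i * (x i - y i)\<bar>"
    unfolding g'_def a_def using Dpos[OF Epos, of \<tau>] Epos[of \<tau>] by (simp add: abs_mult)
  also have "\<dots> \<le> deriv \<phi> (E \<tau>) * E \<tau> * (\<Sum>i<d. a i * b i)"
  proof -
    have "\<bar>\<Sum>i<d. a i * (x i - y i)\<bar> \<le> (\<Sum>i<d. \<bar>a i * (x i - y i)\<bar>)" by (rule sum_abs)
    also have "\<dots> = (\<Sum>i<d. a i * b i)" unfolding b_def using apos by (intro sum.cong) (auto simp: abs_mult less_imp_le)
    finally show ?thesis using DE by (intro mult_left_mono) auto
  qed
  also have "\<dots> \<le> deriv \<phi> (E \<tau>) * E \<tau> * (A powr (1/p) * B powr (1/q))"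
    unfolding A_def B_def using DE
    by (intro mult_left_mono holder) (use apos p1 q1 pq in \<open>auto simp: b_def less_imp_le\<close>)
  also have "\<dots> \<le> deriv \<phi> (E \<tau>) * E \<tau> * ((d * S_fun \<phi> p m) powr (1/p) * B powr (1/q))"
    using DE AS pq
    by (intro mult_left_mono mult_right_mono powr_mono2) (auto simp: A_def sum_nonneg)
  also have "(d * S_fun \<phi> p m) powr (1/p) = d powr (1/p) * (1 / ((1 + xb) * deriv \<phi> xb))"
    unfolding Sm using pq xbpos Dxb by (simp add: powr_mult powr_powr)
  also have "deriv \<phi> (E \<tau>) * E \<tau> * (d powr (1/p) * (1 / ((1 + xb) * deriv \<phi> xb)) * B powr (1/q))
     = K0 * d powr (1/p) * B powr (1/q)" unfolding K0_def by simp
  finally have ineq: "\<bar>fphi \<phi> lam d x - fphi \<phi> lam d y\<bar> \<le> K0 * d powr (1/p) * B powr (1/q)" .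
  have "\<bar>fphi \<phi> lam d x - fphi \<phi> lam d y\<bar> powr q \<le> (K0 * d powr (1/p) * B powr (1/q)) powr q"
    by (rule powr_mono2) (use pq ineq in auto)
  also have "\<dots> = K0 powr q * d powr (q - 1) * B"
  proof -
    have B0: "B \<ge> 0" unfolding B_def by (simp add: sum_nonneg)
    have "q * (1/p) = q - 1" using pq by (simp add: field_simps)
    then show ?thesis using K0 B0 pq by (simp add: powr_mult powr_powr mult.commute)
  qed
  also have "\<dots> = Xi_fun \<phi> lam q d xb * (\<Sum>i<d. \<bar>x i - y i\<bar> powr q)"
    unfolding Xi_fun_def K0_def Eeq B_def b_def by simp
  finally show ?thesis using xbpos by blast
qed

end

theorem lemma3p2:
  fixes \<phi> :: "real \<Rightarrow> real" and lam p q :: real and d :: nat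
    and x y :: "nat \<Rightarrow> real"
  assumes "lam > 0" and "d \<ge> 1"
    and "message \<phi>"
    and "p > 0" and "q > 0" and "1 / p + 1 / q = 1"
    and "concave_on {0<..} (S_fun \<phi> p)"
    and "\<forall>i<d. x i \<in> \<phi> ` {0<..}" and "\<forall>i<d. y i \<in> \<phi> ` {0<..}"
  shows "ereal (\<bar>fphi \<phi> lam d x - fphi \<phi> lam d y\<bar> powr q)
           \<le> xi_fun \<phi> lam q d * ereal (\<Sum>i<d. \<bar>x i - y i\<bar> powr q)"
proof -
  interpret msg \<phi> by standard (rule assms(3))
  obtain xb where xb: "xb > 0" "\<bar>fphi \<phi> lam d x - fphi \<phi> lam d y\<bar> powr q
           \<le> Xi_fun \<phi> lam q d xb * (\<Sum>i<d. \<bar>x i - y i\<bar> powr q)"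
    using main[of lam d p q x y] assms unfolding J_def by blast
  have B0: "(\<Sum>i<d. \<bar>x i - y i\<bar> powr q) \<ge> 0" by (simp add: sum_nonneg)
  have "ereal (\<bar>fphi \<phi> lam d x - fphi \<phi> lam d y\<bar> powr q)
      \<le> ereal (Xi_fun \<phi> lam q d xb) * ereal (\<Sum>i<d. \<bar>x i - y i\<bar> powr q)"
    using xb by simp
  also have "\<dots> \<le> xi_fun \<phi> lam q d * ereal (\<Sum>i<d. \<bar>x i - y i\<bar> powr q)"
    unfolding xi_fun_def using xb B0
    by (intro ereal_mult_right_mono SUP_upper) auto
  finally show ?thesis .
qed

end
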